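(* Consider a unit-demand buyer with value distribution $\mathcal{D}$ over $m$ items, a deterministic item pricing $p\in\mathbb{R}_+^m$, and a random set $S\subseteq[m]$ of available items (independent of the buyer's value). Let $x^*=\mathbb{E}_S[\mathbf{x}_{p,S}]$. Then for every $y\in\Delta_m$ with $y\preceq x^*$ there exists a random item pricing $q$ (independent of $S$ and of the buyer's value) such that $$\mathbb{E}_{q,S}[\mathbf{x}_{q,S}]=y\quad\text{and}\quad \mathbb{E}_{q,S}[\textsc{Rev}_{q,S}]=y\cdot p.$$
   Context: Unit-demand buyer: valuation $v$ with $v_j\ge0$ per item, $v(S)=\max_{j\in S}v_j$; $\mathcal{D}$ arbitrary. $\Delta_m=\{\lambda\in[0,1]^m:\sum_j\lambda_j\le1\}$. An item pricing is a vector $p\in(\mathbb{R}_+\cup\{\infty\})^m$; when the set of available items is $S$, the buyer purchases an item $j\in S$ maximizing $v_j-p_j$ if this maximum is nonnegative (otherwise nothing) and pays $p_j$. $\mathbf{x}_{p,S}\in\Delta_m$ is the vector whose $j$-th entry is the probability over $v\sim\mathcal{D}$ that item $j$ is purchased under pricing $p$ with available set $S$, and $\textsc{Rev}_{p,S}$ the corresponding expected payment. A random item pricing is a distribution over item pricings; expectations are also taken over its randomness. $y\preceq x$ means $y_j\le x_j$ for all $j$. *)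

theory Defs
  imports "HOL-Probability.Probability"
begin

text \<open>Items are the elements of a finite linearly ordered type 'm (so m = CARD('m)). Ties among utility-maximizing items are broken
in favour of the smallest item (w.r.t. the order of 'm); the buyer buys when the
maximal utility is nonnegative.\<close>

definition utility :: "('m::{finite,linorder} \<Rightarrow> ennreal) \<Rightarrow> (real, 'm) vec \<Rightarrow> 'm \<Rightarrow> real" where
  "utility p v j = v $ j - enn2real (p j)"

definition affordable :: "('m::{finite,linorder} \<Rightarrow> ennreal) \<Rightarrow> 'm set \<Rightarrow> 'm set" where
  "affordable p S = {j \<in> S. p j \<noteq> \<top>}"

definition choice :: "('m::{finite,linorder} \<Rightarrow> ennreal) \<Rightarrow> 'm set \<Rightarrow> (real, 'm) vec \<Rightarrow> 'm option" where
  "choice p S v =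
     (if affordable p S = {} then None
      else (let M = Max (utility p v ` affordable p S) in
            if M \<ge> 0 then Some (Min {j \<in> affordable p S. utility p v j = M}) else None))"

definition xvec :: "((real, 'm) vec) measure \<Rightarrow> ('m::{finite,linorder} \<Rightarrow> ennreal) \<Rightarrow> 'm set \<Rightarrow> 'm \<Rightarrow> real" where
  "xvec D p S j = measure D {v \<in> space D. choice p S v = Some j}"

definition payment :: "('m::{finite,linorder} \<Rightarrow> ennreal) \<Rightarrow> 'm set \<Rightarrow> (real, 'm) vec \<Rightarrow> real" where
  "payment p S v = (case choice p S v of None \<Rightarrow> 0 | Some j \<Rightarrow> enn2real (p j))"

definition Rev :: "((real, 'm) vec) measure \<Rightarrow> ('m::{finite,linorder} \<Rightarrow> ennreal) \<Rightarrow> 'm set \<Rightarrow> real" where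
  "Rev D p S = (\<integral>v. payment p S v \<partial>D)"

end

theory Submission
  imports Defs
begin


lemma ite_mult01: "(if a then 1 else 0) * (b::real) = (if a then b else 0)" by simp

lemma comb_step:
  fixes f :: "'a::finite set \<Rightarrow> 'a \<Rightarrow> real"
  assumes A: "\<And>T j. j \<in> T \<Longrightarrow> f T j = 0"
    and B: "\<And>T k j. j \<notin> insert k T \<Longrightarrow> f T j \<le> f (insert k T) j"
    and C: "\<And>T j. 0 \<le> f T j"
  shows "\<forall>T. card (- T) = n \<longrightarrow> (\<forall>y. (\<forall>j. 0 \<le> y j \<and> y j \<le> f T j) \<longrightarrow>
     (\<exists>w. (\<forall>U. 0 \<le> w U) \<and> sum w UNIV = 1 \<and> (\<forall>j. (\<Sum>U\<in>UNIV. w U * f U j) = y j)))"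
proof (induction n)
  case 0
  show ?case
  proof (intro allI impI)
    fix T :: "'a set" and y :: "'a \<Rightarrow> real"
    assume "card (- T) = 0" and y: "\<forall>j. 0 \<le> y j \<and> y j \<le> f T j"
    then have T: "T = UNIV" by (simp, blast)
    have y0: "y j = 0" for j using y A[of j T] T by (metis UNIV_I order_antisym)
    show "\<exists>w. (\<forall>U. 0 \<le> w U) \<and> sum w UNIV = 1 \<and> (\<forall>j. (\<Sum>U\<in>UNIV. w U * f U j) = y j)"
      by (rule exI[of _ "\<lambda>U. if U = UNIV then 1 else 0"])
         (auto simp: y0 A ite_mult01 sum.delta cong: if_cong)
  qed
next
  case (Suc n)
  show ?case
  proof (intro allI impI)
    fix T :: "'a set" and y :: "'a \<Rightarrow> real"
    assume cT: "card (- T) = Suc n" and y: "\<forall>j. 0 \<le> y j \<and> y j \<le> f T j"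
    define N where "N = - T"
    have Nne: "N \<noteq> {}" using cT N_def by auto
    define r where "r j = (if f T j > 0 then y j / f T j else 1)" for j
    define t where "t = Min (r ` N)"
    obtain k where kN: "k \<in> N" and rk: "r k = t"
      using Min_in[of "r ` N"] Nne t_def by fastforce
    have tle: "t \<le> r j" if "j \<in> N" for j using that t_def by simp
    have yT: "y j = 0" if "j \<in> T" for j using y A[OF that] by (metis order_antisym)
    have r1: "r j \<le> 1" for j using y[rule_format, of j] by (auto simp: r_def divide_le_eq_1)
    have r0: "0 \<le> r j" for j using y[rule_format, of j] by (auto simp: r_def)
    show "\<exists>w. (\<forall>U. 0 \<le> w U) \<and> sum w UNIV = 1 \<and> (\<forall>j. (\<Sum>U\<in>UNIV. w U * f U j) = y j)"
    proof (cases "t \<ge> 1")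
      case True
      have "y j = f T j" for j
      proof (cases "j \<in> T")
        case True thus ?thesis using yT A by simp
      next
        case False
        then have "j \<in> N" using N_def by simp
        then have "1 \<le> r j" using tle True by fastforce
        then show ?thesis using y[rule_format, of j]
          by (auto simp: r_def le_divide_eq split: if_splits)
      qed
      then show ?thesis
        by (intro exI[of _ "\<lambda>U. if U = T then 1 else 0"])
           (auto simp: ite_mult01 sum.delta cong: if_cong)
    next
      case False
      then have fk: "f T k > 0" using rk r_def by (auto split: if_splits)
      have t0: "0 \<le> t" using rk r0 by metis
      have tk: "t * f T k = y k" using rk fk by (auto simp: r_def)
      define z where "z j = (y j - t * f T j) / (1 - t)" for j
      have z: "0 \<le> z j \<and> z j \<le> f (insert k T) j" for j
      proof (cases "j \<in> insert k T")
        case True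
        then have "z j = 0" using yT A tk z_def by auto
        then show ?thesis using C by simp
      next
        case jn: False
        then have "j \<in> N" using N_def by simp
        then have tj: "t \<le> r j" using tle by simp
        have "t * f T j \<le> y j"
        proof (cases "f T j > 0")
          case True thus ?thesis using tj by (simp add: r_def le_divide_eq)
        next
          case False thus ?thesis using C[of T j] y t0 by auto
        qed
        moreover have "y j - t * f T j \<le> (1 - t) * f T j" using y[rule_format, of j]
          by (simp add: algebra_simps)
        ultimately have "0 \<le> z j \<and> z j \<le> f T j" using False
          by (simp add: z_def divide_le_eq mult.commute)
        then show ?thesis using B[OF jn] by linarith
      qed
      have cT': "card (- insert k T) = n" using cT kN N_def
        by (metis Compl_insert card_Diff_singleton diff_Suc_1 finite)
      obtain w' where w': "\<forall>U. 0 \<le> w' U" "sum w' UNIV = 1"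
          "\<forall>j. (\<Sum>U\<in>UNIV. w' U * f U j) = z j"
        using Suc.IH[rule_format, OF cT' z] by blast
      define w where "w U = t * (if U = T then 1 else 0) + (1 - t) * w' U" for U
      have "\<forall>U. 0 \<le> w U" using w' t0 False by (simp add: w_def)
      moreover have "sum w UNIV = 1"
        by (simp add: w_def sum.distrib sum_distrib_left[symmetric] w'(2))
      moreover have "(\<Sum>U\<in>UNIV. w U * f U j) = y j" for j
      proof -
        have "(\<Sum>U\<in>UNIV. w U * f U j) = t * f T j + (1 - t) * z j"
          by (simp add: w_def distrib_right sum.distrib sum_distrib_left[symmetric]
              mult.assoc ite_mult01 sum.delta w'(3)[rule_format, symmetric] cong: if_cong)
        also have "\<dots> = y j" using False by (simp add: z_def)
        finally show ?thesis .
      qed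
      ultimately show ?thesis by blast
    qed
  qed
qed



lemma choice_Some_iff:
  "choice q S v = Some j \<longleftrightarrow>
     j \<in> affordable q S \<and> 0 \<le> utility q v j \<and>
     (\<forall>i\<in>affordable q S. utility q v i \<le> utility q v j) \<and>
     (\<forall>i\<in>affordable q S. i < j \<longrightarrow> utility q v i < utility q v j)"
proof -
  let ?A = "affordable q S" and ?u = "utility q v"
  have fin: "finite ?A" by simp
  show ?thesis
  proof
    assume h: "choice q S v = Some j"
    then have ne: "?A \<noteq> {}" by (auto simp: choice_def split: if_splits)
    define M where "M = Max (?u ` ?A)"
    have M0: "0 \<le> M" and jd: "j = Min {i \<in> ?A. ?u i = M}"
      using h ne by (auto simp: choice_def M_def Let_def split: if_splits)
    have "M \<in> ?u ` ?A" using ne M_def by simp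
    then have ne2: "{i \<in> ?A. ?u i = M} \<noteq> {}" by auto
    have jin: "j \<in> {i \<in> ?A. ?u i = M}" using Min_in[OF _ ne2] jd by simp
    have le: "?u i \<le> M" if "i \<in> ?A" for i using that M_def by simp
    have lt: "?u i < M" if "i \<in> ?A" "i < j" for i
    proof -
      have "?u i \<noteq> M"
      proof
        assume "?u i = M"
        then have "j \<le> i" using jd that(1) by (simp add: Min_le)
        then show False using that(2) by simp
      qed
      then show ?thesis using le[OF that(1)] by simp
    qed
    show "j \<in> ?A \<and> 0 \<le> ?u j \<and> (\<forall>i\<in>?A. ?u i \<le> ?u j) \<and> (\<forall>i\<in>?A. i < j \<longrightarrow> ?u i < ?u j)"
      using jin M0 le lt by auto
  next
    assume h: "j \<in> ?A \<and> 0 \<le> ?u j \<and> (\<forall>i\<in>?A. ?u i \<le> ?u j) \<and> (\<forall>i\<in>?A. i < j \<longrightarrow> ?u i < ?u j)"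
    then have ne: "?A \<noteq> {}" by auto
    have M: "Max (?u ` ?A) = ?u j" using h by (intro Max_eqI) auto
    have "Min {i \<in> ?A. ?u i = ?u j} = j"
      using h by (intro Min_eqI) (auto simp: not_less[symmetric])
    then show "choice q S v = Some j" using ne M h by (simp add: choice_def Let_def)
  qed
qed

lemma choice_meas:
  fixes D :: "((real, 'm::{finite,linorder}) vec) measure"
  assumes "sets D = sets borel"
  shows "{v \<in> space D. choice q S v = Some j} \<in> sets D"
proof -
  have "{v \<in> space D. choice q S v = Some j} = {v \<in> space borel. j \<in> affordable q S \<and> 0 \<le> utility q v j \<and>
     (\<forall>i\<in>affordable q S. utility q v i \<le> utility q v j) \<and>
     (\<forall>i\<in>affordable q S. i < j \<longrightarrow> utility q v i < utility q v j)}"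
    using sets_eq_imp_space_eq[OF assms] by (simp add: choice_Some_iff)
  also have "\<dots> \<in> sets borel"
    unfolding utility_def by measurable
  finally show ?thesis using assms by simp
qed



definition pT :: "('m \<Rightarrow> real) \<Rightarrow> 'm set \<Rightarrow> 'm \<Rightarrow> ennreal" where
  "pT p T = (\<lambda>i. if i \<in> T then \<top> else ennreal (p i))"

lemma choice_in_aff: "choice q S v = Some j \<Longrightarrow> j \<in> affordable q S"
  by (simp add: choice_Some_iff)

lemma xvec_zero:
  fixes D :: "((real, 'm::{finite,linorder}) vec) measure"
  assumes "j \<in> T" shows "xvec D (pT p T) S j = 0"
proof -
  have "{v \<in> space D. choice (pT p T) S v = Some j} = {}"
    using assms choice_in_aff[of "pT p T" S _ j] by (auto simp: affordable_def pT_def)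
  then show ?thesis unfolding xvec_def by (metis measure_empty)
qed

lemma choice_mono:
  fixes v :: "(real, 'm::{finite,linorder}) vec"
  assumes "j \<notin> insert k T" "choice (pT p T) S v = Some j"
  shows "choice (pT p (insert k T)) S v = Some j"
proof -
  let ?q = "pT p T" and ?q' = "pT p (insert k T)"
  have aff: "affordable ?q' S = affordable ?q S - {k}"
    by (auto simp: affordable_def pT_def)
  have u: "utility ?q' v i = utility ?q v i" if "i \<in> affordable ?q' S" for i
    using that by (auto simp: affordable_def pT_def utility_def)
  have jq: "j \<notin> insert k T" using assms by simp
  have uj: "utility ?q' v j = utility ?q v j" using jq by (simp add: pT_def utility_def)
  show ?thesis using assms(2) jq unfolding choice_Some_iff aff
    using u uj by (auto simp: aff)
qed

lemma xvec_mono: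
  fixes D :: "((real, 'm::{finite,linorder}) vec) measure"
  assumes "prob_space D" "sets D = sets borel" "j \<notin> insert k T"
  shows "xvec D (pT p T) S j \<le> xvec D (pT p (insert k T)) S j"
proof -
  interpret prob_space D by fact
  show ?thesis unfolding xvec_def
    by (intro finite_measure_mono choice_meas[OF assms(2)]) (use choice_mono[OF assms(3)] in auto)
qed

lemma Rev_eq:
  fixes D :: "((real, 'm::{finite,linorder}) vec) measure"
  assumes "prob_space D" "sets D = sets borel"
  shows "Rev D q S = (\<Sum>j\<in>UNIV. xvec D q S j * enn2real (q j))"
proof -
  interpret prob_space D by fact
  let ?E = "\<lambda>j. {v \<in> space D. choice q S v = Some j}"
  have sp: "space D = UNIV" using sets_eq_imp_space_eq[OF assms(2)] by simp
  have pay: "payment q S v = (\<Sum>j\<in>UNIV. indicator (?E j) v * enn2real (q j))" for v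
  proof (cases "choice q S v")
    case None then show ?thesis by (simp add: payment_def indicator_def)
  next
    case (Some a)
    have "(\<Sum>j\<in>UNIV. indicator (?E j) v * enn2real (q j)) = (\<Sum>j\<in>UNIV. if j = a then enn2real (q j) else 0)"
      by (intro sum.cong) (auto simp: indicator_def Some sp)
    then show ?thesis by (simp add: payment_def Some)
  qed
  have "Rev D q S = (\<integral>v. (\<Sum>j\<in>UNIV. indicator (?E j) v * enn2real (q j)) \<partial>D)"
    unfolding Rev_def pay ..
  also have "\<dots> = (\<Sum>j\<in>UNIV. \<integral>v. indicator (?E j) v * enn2real (q j) \<partial>D)"
    by (intro Bochner_Integration.integral_sum integrable_mult_left integrable_real_indicator)
       (auto intro: choice_meas[OF assms(2)] simp: less_top[symmetric])
  also have "\<dots> = (\<Sum>j\<in>UNIV. xvec D q S j * enn2real (q j))"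
    by (simp add: xvec_def Int_absorb2)
  finally show ?thesis .
qed



theorem lemma1:
  fixes D :: "((real, 'm::{finite,linorder}) vec) measure"
    and p :: "'m \<Rightarrow> real"
    and Sd :: "'m set pmf"
    and y :: "'m \<Rightarrow> real"
  assumes "prob_space D"
    and "sets D = sets borel"
    and "AE v in D. \<forall>j. v $ j \<ge> 0"
    and "\<forall>j. p j \<ge> 0"
    and "\<forall>j. 0 \<le> y j \<and> y j \<le> 1"
    and "(\<Sum>j\<in>UNIV. y j) \<le> 1"
    and "\<forall>j. y j \<le> measure_pmf.expectation Sd (\<lambda>S. xvec D (\<lambda>i. ennreal (p i)) S j)"
  shows "\<exists>Q :: ('m \<Rightarrow> ennreal) pmf.
           (\<forall>j. measure_pmf.expectation Q
                  (\<lambda>q. measure_pmf.expectation Sd (\<lambda>S. xvec D q S j)) = y j)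
         \<and> integrable (measure_pmf Q) (\<lambda>q. measure_pmf.expectation Sd (\<lambda>S. Rev D q S))
         \<and> measure_pmf.expectation Q (\<lambda>q. measure_pmf.expectation Sd (\<lambda>S. Rev D q S))
             = (\<Sum>j\<in>UNIV. y j * p j)"
proof -
  define f where "f T j = measure_pmf.expectation Sd (\<lambda>S. xvec D (pT p T) S j)" for T j
  have finSd: "finite (set_pmf Sd)" by (rule finite_subset[of _ UNIV]) auto
  have intSd: "integrable (measure_pmf Sd) g" for g :: "'m set \<Rightarrow> real"
    by (rule integrable_measure_pmf_finite[OF finSd])
  have A: "f T j = 0" if "j \<in> T" for T j
    using xvec_zero[OF that] by (simp add: f_def)
  have B: "f T j \<le> f (insert k T) j" if "j \<notin> insert k T" for T k j
    unfolding f_def by (intro integral_mono intSd xvec_mono[OF assms(1,2) that])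
  have C: "0 \<le> f T j" for T j
    unfolding f_def xvec_def by (intro integral_nonneg_AE) auto
  have p0: "pT p {} = (\<lambda>i. ennreal (p i))" by (simp add: pT_def)
  have y: "\<forall>j. 0 \<le> y j \<and> y j \<le> f {} j" using assms(5,7) by (simp add: f_def p0)
  obtain w where w0: "\<forall>U. 0 \<le> w U" and w1: "sum w UNIV = 1"
      and wy: "\<forall>j. (\<Sum>U\<in>UNIV. w U * f U j) = y j"
  proof -
    have cs: "\<forall>T. card (- T) = card (- {}::'m set) \<longrightarrow> (\<forall>y. (\<forall>j. 0 \<le> y j \<and> y j \<le> f T j) \<longrightarrow>
     (\<exists>w. (\<forall>U. 0 \<le> w U) \<and> sum w UNIV = 1 \<and> (\<forall>j. (\<Sum>U\<in>UNIV. w U * f U j) = y j)))"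
      by (rule comb_step) (use A B C in auto)
    show ?thesis using cs y that by blast
  qed
  have nn: "(\<integral>\<^sup>+x. ennreal (w x) \<partial>count_space UNIV) = 1"
    using w0 w1 by (simp add: nn_integral_count_space_finite sum_ennreal)
  define E where "E = embed_pmf w"
  have pE: "pmf E U = w U" for U unfolding E_def by (rule pmf_embed_pmf[OF _ nn]) (use w0 in auto)
  define Q where "Q = map_pmf (pT p) E"
  have rev: "measure_pmf.expectation Sd (\<lambda>S. Rev D (pT p U) S) = (\<Sum>j\<in>UNIV. f U j * p j)" for U
  proof -
    have "Rev D (pT p U) S = (\<Sum>j\<in>UNIV. xvec D (pT p U) S j * p j)" for S
      unfolding Rev_eq[OF assms(1,2)]
      by (intro sum.cong refl) (use xvec_zero[of _ U D p S] in \<open>auto simp: pT_def assms(4)\<close>)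
    then show ?thesis
      by (simp add: f_def Bochner_Integration.integral_sum intSd)
  qed
  have finE: "finite (set_pmf E)" by (rule finite_subset[of _ UNIV]) auto
  have ex: "measure_pmf.expectation E g = (\<Sum>U\<in>UNIV. w U * g U)" for g :: "'m set \<Rightarrow> real"
    by (subst integral_measure_pmf[of UNIV]) (auto simp: pE)
  have 1: "\<forall>j. measure_pmf.expectation Q
                  (\<lambda>q. measure_pmf.expectation Sd (\<lambda>S. xvec D q S j)) = y j"
    using wy by (simp add: Q_def ex f_def)
  have 2: "integrable (measure_pmf Q) (\<lambda>q. measure_pmf.expectation Sd (\<lambda>S. Rev D q S))"
    unfolding Q_def integrable_map_pmf_eq by (rule integrable_measure_pmf_finite[OF finE])
  have "measure_pmf.expectation Q (\<lambda>q. measure_pmf.expectation Sd (\<lambda>S. Rev D q S))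
      = (\<Sum>U\<in>UNIV. w U * (\<Sum>j\<in>UNIV. f U j * p j))"
    by (simp add: Q_def ex rev)
  also have "\<dots> = (\<Sum>j\<in>UNIV. (\<Sum>U\<in>UNIV. w U * f U j) * p j)"
    by (simp add: sum_distrib_left sum_distrib_right mult.assoc) (rule sum.swap)
  also have "\<dots> = (\<Sum>j\<in>UNIV. y j * p j)" using wy by simp
  finally show ?thesis using 1 2 by blast
qed

end
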